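(* Let $n\ge 2$ and let $k_1,\dots,k_n$ be positive integers with $\sum_{i=1}^n \frac{1}{k_i}=1$. Let $k=\operatorname{lcm}(k_1,\dots,k_n)$ and $w_i=k/k_i$ (so $\sum_i w_i=k$). Then for every real $x\in[\frac1k,1)$, $$\lfloor kx\rfloor-\sum_{i=1}^n\lfloor w_i x\rfloor\ \ge\ 1 .$$
   Context: $\lfloor y\rfloor$ denotes the integer part (floor) of a real number $y$. *)

theory Defs
  imports Complex_Main
begin

end

theory Submission
  imports Defs
begin

theorem mainTheorem2:
  fixes n :: nat and ks :: "nat \<Rightarrow> nat" and x :: real
  assumes "n \<ge> 2"
    and "\<forall>i\<in>{1..n}. ks i > 0"
    and "(\<Sum>i=1..n. 1 / real (ks i)) = 1"
    and "1 / real (Lcm (ks ` {1..n})) \<le> x" and "x < 1"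
  shows "\<lfloor>real (Lcm (ks ` {1..n})) * x\<rfloor>
           - (\<Sum>i=1..n. \<lfloor>real (Lcm (ks ` {1..n}) div ks i) * x\<rfloor>) \<ge> 1"
proof -
  define L where "L = Lcm (ks ` {1..n})"
  define t where "t = \<lfloor>real L * x\<rfloor>"
  define m where "m i = \<lfloor>real (L div ks i) * x\<rfloor>" for i
  have dv: "ks i dvd L" if "i \<in> {1..n}" for i
    unfolding L_def using that by (simp add: dvd_Lcm)
  have L0: "L \<noteq> 0" unfolding L_def using assms(2)
    by (auto simp: Lcm_0_iff)
  have Lpos: "real L > 0" using L0 by simp
  have "1 \<le> real L * x" using assms(4) Lpos unfolding L_def[symmetric]
    by (simp add: field_simps)
  hence t1: "t \<ge> 1" unfolding t_def by linarith
  have "real L * x < real L" using assms(5) Lpos by simp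
  hence tL: "t < int L" unfolding t_def by linarith
  have wi: "real (L div ks i) = real L / real (ks i)" if "i \<in> {1..n}" for i
    using dv[OF that] assms(2) that by (simp add: real_of_nat_div)
  have mk: "m i * int (ks i) \<le> t" if i: "i \<in> {1..n}" for i
  proof -
    have kp: "real (ks i) > 0" using assms(2) i by simp
    have "real_of_int (m i) \<le> real (L div ks i) * x" unfolding m_def by linarith
    hence "real_of_int (m i) * real (ks i) \<le> real (L div ks i) * x * real (ks i)"
      using kp by (simp add: mult_right_mono)
    also have "\<dots> = real L * x" using wi[OF i] kp by simp
    finally have "real_of_int (m i * int (ks i)) \<le> real L * x" by simp
    thus ?thesis unfolding t_def by linarith
  qed
  have mle: "real_of_int (m i) \<le> real_of_int t / real (ks i)" if i: "i \<in> {1..n}" for i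
  proof -
    have kp: "real (ks i) > 0" using assms(2) i by simp
    have "real_of_int (m i) * real (ks i) \<le> real_of_int t"
      using mk[OF i] by (metis of_int_le_iff of_int_mult of_int_of_nat_eq)
    thus ?thesis using kp by (simp add: field_simps)
  qed
  have sumt: "(\<Sum>i=1..n. real_of_int t / real (ks i)) = real_of_int t"
    using assms(3) by (simp add: sum_distrib_left[symmetric] divide_inverse)
  have "(\<Sum>i=1..n. m i) < t"
  proof (rule ccontr)
    assume "\<not> (\<Sum>i=1..n. m i) < t"
    hence ge: "real_of_int t \<le> (\<Sum>i=1..n. real_of_int (m i))"
      by (metis not_less of_int_le_iff of_int_sum)
    have "(\<Sum>i=1..n. real_of_int t / real (ks i) - real_of_int (m i)) = 0"
    proof -
      have "(\<Sum>i=1..n. real_of_int t / real (ks i) - real_of_int (m i)) \<le> 0"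
        using ge sumt by (simp add: sum_subtractf)
      moreover have "(\<Sum>i=1..n. real_of_int t / real (ks i) - real_of_int (m i)) \<ge> 0"
        using mle by (intro sum_nonneg) simp
      ultimately show ?thesis by linarith
    qed
    hence eq: "\<forall>i\<in>{1..n}. real_of_int t / real (ks i) - real_of_int (m i) = 0"
      using mle by (subst sum_nonneg_eq_0_iff[symmetric]) auto
    have "ks i dvd nat t" if i: "i \<in> {1..n}" for i
    proof -
      have kp: "real (ks i) > 0" using assms(2) i by simp
      have "real_of_int t = real_of_int (m i) * real (ks i)"
      proof -
        have "real_of_int t / real (ks i) = real_of_int (m i)" using eq i by auto
        thus ?thesis using kp by (simp add: field_simps)
      qed
      hence "t = m i * int (ks i)" by (metis of_int_eq_iff of_int_mult of_int_of_nat_eq)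
      hence "int (ks i) dvd t" by simp
      hence "int (ks i) dvd int (nat t)" using t1 by simp
      thus ?thesis by (simp only: of_nat_dvd_iff)
    qed
    hence "L dvd nat t" unfolding L_def by (auto intro: Lcm_least)
    moreover have "0 < nat t" "nat t < L" using t1 tL by auto
    ultimately show False using nat_dvd_not_less by blast
  qed
  thus ?thesis unfolding t_def m_def L_def by simp
qed

end
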